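(* Consider the nonrepetitive game over a symbol set $S$ with $|S|\geq 6$. Then for every $n\geq1$ Ann has a strategy such that, whatever Ben plays, the sequence $s_1,\ldots,s_n$ built in the first $n$ moves contains no repetition of size greater than $1$.
   Context: A repetition of size $h\geq1$ in a sequence is a block of consecutive terms of the form $x_1\ldots x_h x_1\ldots x_h$. The nonrepetitive game over a symbol set $S$ is played by two players, Ann and Ben, who alternately (Ann first) choose a symbol from $S$ and append it to the end of the sequence built so far (initially empty); nothing is ever erased. Ann tries to avoid repetitions, Ben tries to create them. *)

theory Defs
  imports Main
begin

definition has_repetition_of_size :: "'a list \<Rightarrow> nat \<Rightarrow> bool" where
  "has_repetition_of_size xs h \<longleftrightarrow> h \<ge> 1 \<and>
     (\<exists>i. i + 2 * h \<le> length xs \<and> take h (drop i xs) = take h (drop (i + h) xs))"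

text \<open>Strategies map the current sequence (history) to the next symbol.
  The sequence after k moves; Ann moves when the current length is even
  (moves 1,3,5,...), Ben when it is odd.\<close>
fun play :: "('a list \<Rightarrow> 'a) \<Rightarrow> ('a list \<Rightarrow> 'a) \<Rightarrow> nat \<Rightarrow> 'a list" where
  "play ann ben 0 = []"
| "play ann ben (Suc k) =
     (let h = play ann ben k in h @ [if even (length h) then ann h else ben h])"

end

theory Submission
  imports Defs
begin

definition good :: "'a list \<Rightarrow> bool" where
  "good s \<longleftrightarrow> (\<forall>k>1. \<not> has_repetition_of_size s k)"

lemma take_drop_take: "i + k \<le> n \<Longrightarrow> take k (drop i (take n s)) = take k (drop i s)"
  by (simp add: drop_take take_take min_def)

lemma rep_take: "has_repetition_of_size (take n s) k \<Longrightarrow> has_repetition_of_size s k"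
  unfolding has_repetition_of_size_def
proof (elim conjE exE)
  fix i assume k: "1 \<le> k" and i: "i + 2 * k \<le> length (take n s)"
    and eq: "take k (drop i (take n s)) = take k (drop (i + k) (take n s))"
  have "take k (drop i s) = take k (drop (i + k) s)"
    using eq i by (simp add: take_drop_take)
  then show "1 \<le> k \<and> (\<exists>i. i + 2 * k \<le> length s \<and> take k (drop i s) = take k (drop (i + k) s))"
    using k i by auto
qed

lemma good_take: "good s \<Longrightarrow> good (take n s)"
  unfolding good_def using rep_take by blast

lemma rep_nth:
  assumes "take h (drop i s) = take h (drop (i+h) s)" "i + 2*h \<le> length s" "d < h"
  shows "s!(i+d) = s!(i+h+d)"
proof -
  have "take h (drop i s) ! d = take h (drop (i+h) s) ! d" using assms(1) by simp
  then show ?thesis using assms(2,3) by (simp add: nth_take nth_drop add.assoc)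
qed

definition ext :: "('a list \<Rightarrow> 'a) \<Rightarrow> 'a list \<Rightarrow> 'a \<Rightarrow> 'a list" where
  "ext \<beta> u x = u @ [x, \<beta> (u @ [x])]"

definition pl :: "('a list \<Rightarrow> 'a) \<Rightarrow> 'a list \<Rightarrow> 'a list" where
  "pl \<beta> r = foldl (ext \<beta>) [] r"

lemma pl_Nil[simp]: "pl \<beta> [] = []" by (simp add: pl_def)

lemma pl_snoc[simp]: "pl \<beta> (r @ [x]) = pl \<beta> r @ [x, \<beta> (pl \<beta> r @ [x])]"
  by (simp add: pl_def ext_def)

lemma pl_length[simp]: "length (pl \<beta> r) = 2 * length r"
  by (induction r rule: rev_induct) auto

lemma pl_prefix: "\<exists>w. pl \<beta> (r @ s) = pl \<beta> r @ w"
proof (induction s rule: rev_induct)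
  case Nil then show ?case by auto
next
  case (snoc x s)
  then obtain w where "pl \<beta> (r @ s) = pl \<beta> r @ w" by blast
  then show ?case by (metis append.assoc pl_snoc)
qed

lemma pl_take: "i \<le> length r \<Longrightarrow> take (2*i) (pl \<beta> r) = pl \<beta> (take i r)"
proof -
  assume i: "i \<le> length r"
  obtain w where w: "pl \<beta> (take i r @ drop i r) = pl \<beta> (take i r) @ w" using pl_prefix by blast
  have "length (take i r) = i" using i by simp
  then show ?thesis using w by simp
qed

lemma pl_nth: "l < length r \<Longrightarrow> pl \<beta> r ! (2*l) = r ! l"
proof -
  assume l: "l < length r"
  have "pl \<beta> r ! (2*l) = take (2 * Suc l) (pl \<beta> r) ! (2*l)" by simp
  also have "\<dots> = pl \<beta> (take (Suc l) r) ! (2*l)" using l by (simp only: pl_take)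
  also have "\<dots> = pl \<beta> (take l r @ [r!l]) ! (2*l)" using l by (simp add: take_Suc_conv_app_nth)
  also have "\<dots> = r ! l" using l by (simp add: nth_append)
  finally show ?thesis .
qed

lemma good_Nil: "good []"
  by (auto simp: good_def has_repetition_of_size_def)

lemma bad_child:
  assumes g: "good (pl \<beta> r)" and ng: "\<not> good (pl \<beta> (r @ [x]))" and m: "length r = m"
  shows "\<exists>h. 2 \<le> h \<and> h \<le> Suc m \<and> (\<forall>l. Suc m - h div 2 \<le> l \<and> l \<le> m \<longrightarrow>
            h \<le> 2*l \<and> (r@[x])!l = pl \<beta> (r@[x]) ! (2*l - h))"
proof -
  let ?s = "pl \<beta> (r @ [x])"
  have len: "length ?s = 2*m + 2" using m by simp
  obtain h where h1: "h > 1" and rep: "has_repetition_of_size ?s h" using ng unfolding good_def by blast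
  then obtain i where i: "i + 2*h \<le> length ?s" and eq: "take h (drop i ?s) = take h (drop (i+h) ?s)"
    unfolding has_repetition_of_size_def by blast
  have pre: "take (2*m) ?s = pl \<beta> r" using m by (simp add: pl_take)
  have big: "i + 2*h > 2*m"
  proof (rule ccontr)
    assume nb: "\<not> i + 2*h > 2*m"
    then have "i + 2*h \<le> length (take (2*m) ?s)" using len by simp
    moreover have "take h (drop i (take (2*m) ?s)) = take h (drop (i+h) (take (2*m) ?s))"
    proof -
      have e1: "take h (drop i (take (2*m) ?s)) = take h (drop i ?s)"
        by (rule take_drop_take) (use nb in linarith)
      have e2: "take h (drop (i+h) (take (2*m) ?s)) = take h (drop (i+h) ?s)"
        by (rule take_drop_take) (use nb in linarith)
      show ?thesis unfolding e1 e2 by (rule eq)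
    qed
    ultimately have "has_repetition_of_size (take (2*m) ?s) h"
      using h1 unfolding has_repetition_of_size_def by auto
    then show False using g pre h1 unfolding good_def by auto
  qed
  have hm: "h \<le> Suc m" using i len by simp
  show ?thesis
  proof (intro exI conjI allI impI)
    show "2 \<le> h" using h1 by simp
    show "h \<le> Suc m" by (rule hm)
    fix l assume l: "Suc m - h div 2 \<le> l \<and> l \<le> m"
    have a1: "i + h \<le> 2*l" using l i len h1 by linarith
    have a2: "2*l < i + 2*h" using l big by linarith
    show "h \<le> 2*l" using a1 by simp
    have "?s ! (i + (2*l - i - h)) = ?s ! (i + h + (2*l - i - h))"
      by (rule rep_nth[OF eq i]) (use a1 a2 in linarith)
    moreover have "i + (2*l - i - h) = 2*l - h" using a1 by simp
    moreover have "i + h + (2*l - i - h) = 2*l" using a1 by simp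
    ultimately have "?s ! (2*l - h) = ?s ! (2*l)" by simp
    moreover have "?s ! (2*l) = (r@[x]) ! l" using l m by (intro pl_nth) simp
    ultimately show "(r@[x])!l = ?s ! (2*l - h)" by simp
  qed
qed

definition G :: "('a list \<Rightarrow> 'a) \<Rightarrow> 'a set \<Rightarrow> nat \<Rightarrow> 'a list set" where
  "G \<beta> T m = {r. set r \<subseteq> T \<and> length r = m \<and> good (pl \<beta> r)}"

definition B :: "('a list \<Rightarrow> 'a) \<Rightarrow> 'a set \<Rightarrow> nat \<Rightarrow> nat \<Rightarrow> 'a list set" where
  "B \<beta> T m h = {r. set r \<subseteq> T \<and> length r = Suc m \<and> take (Suc m - h div 2) r \<in> G \<beta> T (Suc m - h div 2)
      \<and> (\<forall>l. Suc m - h div 2 \<le> l \<and> l \<le> m \<longrightarrow> h \<le> 2*l \<and> r!l = pl \<beta> r ! (2*l - h))}"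

lemma finite_G: "finite T \<Longrightarrow> finite (G \<beta> T m)"
  unfolding G_def by (rule finite_subset[OF _ finite_lists_length_eq[of T m]]) auto

lemma finite_B: "finite T \<Longrightarrow> finite (B \<beta> T m h)"
  unfolding B_def by (rule finite_subset[OF _ finite_lists_length_eq[of T "Suc m"]]) auto

lemma B_det:
  assumes r1: "r1 \<in> B \<beta> T m h" and r2: "r2 \<in> B \<beta> T m h" and h: "2 \<le> h"
    and tk: "take (Suc m - h div 2) r1 = take (Suc m - h div 2) r2"
  shows "r1 = r2"
proof -
  let ?L = "Suc m - h div 2"
  have P1: "\<forall>l. ?L \<le> l \<and> l \<le> m \<longrightarrow> h \<le> 2*l \<and> r1!l = pl \<beta> r1 ! (2*l - h)"
    and len1: "length r1 = Suc m" using r1 unfolding B_def by auto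
  have P2: "\<forall>l. ?L \<le> l \<and> l \<le> m \<longrightarrow> h \<le> 2*l \<and> r2!l = pl \<beta> r2 ! (2*l - h)"
    and len2: "length r2 = Suc m" using r2 unfolding B_def by auto
  have LS: "?L \<le> Suc m" by simp
  have "take (Suc m) r1 = take (Suc m) r2" using LS
  proof (induction rule: dec_induct)
    case base then show ?case using tk by simp
  next
    case (step l)
    have lm: "l \<le> m" using step.hyps by simp
    have ih: "take l r1 = take l r2" using step.IH by simp
    have hl1: "h \<le> 2*l" and e1: "r1!l = pl \<beta> r1 ! (2*l - h)" using P1 step.hyps lm by auto
    have e2: "r2!l = pl \<beta> r2 ! (2*l - h)" using P2 step.hyps lm by auto
    have lt: "2*l - h < 2*l" using hl1 h by simp
    have "pl \<beta> r1 ! (2*l - h) = take (2*l) (pl \<beta> r1) ! (2*l - h)" using lt by simp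
    also have "\<dots> = pl \<beta> (take l r1) ! (2*l - h)" using lm len1 by (simp add: pl_take)
    also have "\<dots> = pl \<beta> (take l r2) ! (2*l - h)" using ih by simp
    also have "\<dots> = take (2*l) (pl \<beta> r2) ! (2*l - h)" using lm len2 by (simp add: pl_take)
    also have "\<dots> = pl \<beta> r2 ! (2*l - h)" using lt by simp
    finally have "r1!l = r2!l" using e1 e2 by simp
    then show ?case using ih lm len1 len2 by (simp add: take_Suc_conv_app_nth)
  qed
  then show ?thesis using len1 len2 by simp
qed

lemma card_B: assumes "finite T" "2 \<le> h"
  shows "card (B \<beta> T m h) \<le> card (G \<beta> T (Suc m - h div 2))"
proof (rule card_inj_on_le[where f = "take (Suc m - h div 2)"])
  show "inj_on (take (Suc m - h div 2)) (B \<beta> T m h)"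
    unfolding inj_on_def using B_det assms(2) by blast
  show "take (Suc m - h div 2) ` B \<beta> T m h \<subseteq> G \<beta> T (Suc m - h div 2)"
    unfolding B_def by auto
  show "finite (G \<beta> T (Suc m - h div 2))" by (rule finite_G[OF assms(1)])
qed

lemma sum_div2:
  fixes f :: "nat \<Rightarrow> nat" and M :: nat
  shows "(\<Sum>h\<in>{2..2*M+1}. f (h div 2)) = 2 * (\<Sum>j\<in>{1..M}. f j)"
proof (induction M)
  case 0 then show ?case by simp
next
  case (Suc M)
  have "{2..2*Suc M+1} = insert (2*M+3) (insert (2*M+2) {2..2*M+1})" by auto
  then have "(\<Sum>h\<in>{2..2*Suc M+1}. f (h div 2)) = f (Suc M) + f (Suc M) + (\<Sum>h\<in>{2..2*M+1}. f (h div 2))"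
    by simp
  also have "\<dots> = 2 * (\<Sum>j\<in>{1..Suc M}. f j)" using Suc by simp
  finally show ?case .
qed

lemma count_step:
  assumes fin: "finite T" and c6: "card T = 6"
  shows "6 * card (G \<beta> T m) \<le> card (G \<beta> T (Suc m)) + 2 * (\<Sum>i\<in>{1..m}. card (G \<beta> T i))"
proof -
  let ?E = "(\<lambda>(r,x). r @ [x]) ` (G \<beta> T m \<times> T)"
  have inj: "inj_on (\<lambda>(r,x). r @ [x]) (G \<beta> T m \<times> T)" by (auto simp: inj_on_def)
  have cE: "card ?E = card (G \<beta> T m) * 6"
    using card_image[OF inj] c6 by (simp add: card_cartesian_product)
  have finE: "finite ?E" using finite_G[OF fin] fin by simp
  have sub: "?E - G \<beta> T (Suc m) \<subseteq> (\<Union>h\<in>{2..Suc m}. B \<beta> T m h)"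
  proof
    fix r' assume "r' \<in> ?E - G \<beta> T (Suc m)"
    then obtain r x where rG: "r \<in> G \<beta> T m" and xT: "x \<in> T" and r': "r' = r @ [x]"
      and nG: "r @ [x] \<notin> G \<beta> T (Suc m)" by auto
    have sr: "set r \<subseteq> T" and lr: "length r = m" and gr: "good (pl \<beta> r)" using rG unfolding G_def by auto
    have ng: "\<not> good (pl \<beta> (r @ [x]))" using nG sr xT lr unfolding G_def by auto
    obtain h where h2: "2 \<le> h" and hm: "h \<le> Suc m" and P: "\<forall>l. Suc m - h div 2 \<le> l \<and> l \<le> m \<longrightarrow>
            h \<le> 2*l \<and> (r@[x])!l = pl \<beta> (r@[x]) ! (2*l - h)"
      using bad_child[OF gr ng lr] by blast
    let ?L = "Suc m - h div 2"
    have Lm: "?L \<le> m" using h2 by simp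
    have tk: "take ?L (r @ [x]) = take ?L r" using Lm lr by simp
    have "take ?L r \<in> G \<beta> T ?L"
    proof -
      have "pl \<beta> (take ?L r) = take (2 * ?L) (pl \<beta> r)" using Lm lr by (simp add: pl_take)
      then have "good (pl \<beta> (take ?L r))" using good_take[OF gr] by simp
      then show ?thesis using sr Lm lr set_take_subset[of ?L r] unfolding G_def by auto
    qed
    then have "r @ [x] \<in> B \<beta> T m h" using sr xT lr P tk unfolding B_def by auto
    then show "r' \<in> (\<Union>h\<in>{2..Suc m}. B \<beta> T m h)" using h2 hm r' by auto
  qed
  have "card (?E - G \<beta> T (Suc m)) \<le> card (\<Union>h\<in>{2..Suc m}. B \<beta> T m h)"
    by (rule card_mono[OF _ sub]) (simp add: finite_B[OF fin])
  also have "\<dots> \<le> (\<Sum>h\<in>{2..Suc m}. card (B \<beta> T m h))" by (rule card_UN_le) simp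
  also have "\<dots> \<le> (\<Sum>h\<in>{2..Suc m}. card (G \<beta> T (Suc m - h div 2)))"
    by (rule sum_mono) (use card_B[OF fin] in auto)
  also have "\<dots> \<le> (\<Sum>h\<in>{2..2*m+1}. card (G \<beta> T (Suc m - h div 2)))"
    by (rule sum_mono2) auto
  also have "\<dots> = 2 * (\<Sum>j\<in>{1..m}. card (G \<beta> T (Suc m - j)))"
    by (rule sum_div2[where f = "\<lambda>j. card (G \<beta> T (Suc m - j))"])
  also have "(\<Sum>j\<in>{1..m}. card (G \<beta> T (Suc m - j))) = (\<Sum>i\<in>{1..m}. card (G \<beta> T i))"
    using sum.atLeastAtMost_rev[of "\<lambda>i. card (G \<beta> T i)" 1 m] by simp
  finally have bad: "card (?E - G \<beta> T (Suc m)) \<le> 2 * (\<Sum>i\<in>{1..m}. card (G \<beta> T i))" .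
  have "card ?E \<le> card (?E \<inter> G \<beta> T (Suc m)) + card (?E - G \<beta> T (Suc m))"
  proof -
    have "?E = (?E \<inter> G \<beta> T (Suc m)) \<union> (?E - G \<beta> T (Suc m))" by auto
    then show ?thesis by (metis card_Un_le)
  qed
  moreover have "card (?E \<inter> G \<beta> T (Suc m)) \<le> card (G \<beta> T (Suc m))"
    by (rule card_mono) (auto simp: finite_G[OF fin])
  ultimately show ?thesis using cE bad by simp
qed

lemma count_pos:
  assumes fin: "finite T" and c6: "card T = 6"
  shows "\<exists>r. set r \<subseteq> T \<and> length r = N \<and> good (pl \<beta> r)"
proof -
  let ?g = "\<lambda>i. card (G \<beta> T i)"
  have g0: "?g 0 = 1"
  proof -
    have "G \<beta> T 0 = {[]}" unfolding G_def using good_Nil by auto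
    then show ?thesis by simp
  qed
  have Q: "2 * (\<Sum>i\<in>{1..m}. ?g i) \<le> 3 * ?g m \<and> 3 * ?g m \<le> ?g (Suc m)" for m
  proof (induction m)
    case 0 then show ?case using count_step[OF fin c6, of \<beta> 0] g0 by simp
  next
    case (Suc m)
    have c1: "6 * ?g m \<le> ?g (Suc m) + 2 * (\<Sum>i\<in>{1..m}. ?g i)" by (rule count_step[OF fin c6])
    have c2: "6 * ?g (Suc m) \<le> ?g (Suc (Suc m)) + 2 * (\<Sum>i\<in>{1..Suc m}. ?g i)" by (rule count_step[OF fin c6])
    have s: "(\<Sum>i\<in>{1..Suc m}. ?g i) = (\<Sum>i\<in>{1..m}. ?g i) + ?g (Suc m)" by simp
    show ?case using Suc.IH c1 c2 s by linarith
  qed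
  have "?g m \<ge> 1" for m
  proof (induction m)
    case 0 then show ?case using g0 by simp
  next
    case (Suc m) then show ?case using Q[of m] by simp
  qed
  then have "G \<beta> T N \<noteq> {}" using g0 by (metis card.empty not_one_le_zero)
  then show ?thesis unfolding G_def by auto
qed

primrec W :: "'a set \<Rightarrow> 'a set \<Rightarrow> nat \<Rightarrow> 'a list \<Rightarrow> bool" where
  "W T S 0 u = good u"
| "W T S (Suc k) u = (\<exists>x\<in>T. \<forall>y\<in>S. W T S k (u @ [x, y]))"

lemma loseW:
  assumes "\<not> W T S N []"
  shows "\<exists>\<beta>. \<forall>r. set r \<subseteq> T \<and> length r = N \<longrightarrow> \<not> good (pl \<beta> r)"
proof -
  define \<beta> where "\<beta> v = (SOME y. y \<in> S \<and> \<not> W T S (N - Suc (length v div 2)) (v @ [y]))" for v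
  have claim: "set r \<subseteq> T \<and> length r \<le> N \<longrightarrow> \<not> W T S (N - length r) (pl \<beta> r)" for r
  proof (induction r rule: rev_induct)
    case Nil then show ?case using assms by simp
  next
    case (snoc x r)
    show ?case
    proof
      assume a: "set (r @ [x]) \<subseteq> T \<and> length (r @ [x]) \<le> N"
      let ?k = "N - Suc (length r)"
      have NS: "N - length r = Suc ?k" using a by auto
      have "\<not> W T S (N - length r) (pl \<beta> r)" using snoc a by simp
      then have "\<not> W T S (Suc ?k) (pl \<beta> r)" using NS by simp
      moreover have xT: "x \<in> T" using a by simp
      ultimately have "\<exists>y. y \<in> S \<and> \<not> W T S ?k (pl \<beta> r @ [x, y])" by auto
      moreover have "length (pl \<beta> r @ [x]) div 2 = length r" by simp
      ultimately have "\<not> W T S ?k (pl \<beta> r @ [x, \<beta> (pl \<beta> r @ [x])])"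
        unfolding \<beta>_def by (smt (verit, ccfv_threshold) append_Cons append_self_conv2 someI_ex append_assoc)
      then show "\<not> W T S (N - length (r @ [x])) (pl \<beta> (r @ [x]))" by simp
    qed
  qed
  show ?thesis
  proof (intro exI allI impI)
    fix r assume "set r \<subseteq> T \<and> length r = N"
    then show "\<not> good (pl \<beta> r)" using claim[of r] by simp
  qed
qed

lemma play_length[simp]: "length (play ann ben k) = k"
  by (induction k) (auto simp: Let_def)

lemma play_take: "n \<le> m \<Longrightarrow> play ann ben n = take n (play ann ben m)"
proof (induction m)
  case 0 then show ?case by simp
next
  case (Suc m)
  show ?case
  proof (cases "n \<le> m")
    case True
    then have "take n (play ann ben (Suc m)) = take n (play ann ben m)" by (simp add: Let_def)
    then show ?thesis using Suc True by simp
  next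
    case False
    then have "n = Suc m" using Suc by simp
    then show ?thesis by (simp add: Let_def)
  qed
qed

lemma winW:
  assumes w: "W T S N []" and TS: "T \<subseteq> S" and Tne: "T \<noteq> {}"
  shows "\<exists>ann. (\<forall>h. ann h \<in> S) \<and> (\<forall>ben. (\<forall>h. ben h \<in> S) \<longrightarrow> good (play ann ben (2*N)))"
proof -
  define ann where "ann v = (if \<exists>x\<in>T. \<forall>y\<in>S. W T S (N - Suc (length v div 2)) (v @ [x, y])
      then SOME x. x\<in>T \<and> (\<forall>y\<in>S. W T S (N - Suc (length v div 2)) (v @ [x, y]))
      else SOME x. x \<in> T)" for v
  have annT: "ann v \<in> T" for v
  proof (cases "\<exists>x\<in>T. \<forall>y\<in>S. W T S (N - Suc (length v div 2)) (v @ [x, y])")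
    case True then show ?thesis unfolding ann_def by (smt (verit) someI_ex)
  next
    case False
    then have "ann v = (SOME x. x \<in> T)" unfolding ann_def by meson
    then show ?thesis using Tne by (simp add: some_in_eq)
  qed
  have annW: "\<exists>x\<in>T. \<forall>y\<in>S. W T S (N - Suc (length v div 2)) (v @ [x, y]) \<Longrightarrow>
      \<forall>y\<in>S. W T S (N - Suc (length v div 2)) (v @ [ann v, y])" for v
    unfolding ann_def by (smt (verit) someI_ex)
  show ?thesis
  proof (intro exI conjI allI impI)
    show "ann h \<in> S" for h using annT TS by auto
    fix ben :: "'a list \<Rightarrow> 'a" assume bS: "\<forall>h. ben h \<in> S"
    have "i \<le> N \<Longrightarrow> W T S (N - i) (play ann ben (2*i))" for i
    proof (induction i)
      case 0 then show ?case using w by simp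
    next
      case (Suc i)
      let ?h = "play ann ben (2*i)"
      have NS: "N - i = Suc (N - Suc i)" using Suc by simp
      have "W T S (Suc (N - Suc i)) ?h" using Suc NS by simp
      then have ex: "\<exists>x\<in>T. \<forall>y\<in>S. W T S (N - Suc (length ?h div 2)) (?h @ [x, y])" by simp
      have "W T S (N - Suc i) (?h @ [ann ?h, ben (?h @ [ann ?h])])"
        using annW[OF ex] bS by simp
      moreover have "play ann ben (2 * Suc i) = ?h @ [ann ?h, ben (?h @ [ann ?h])]"
        by (simp add: Let_def)
      ultimately show ?case by simp
    qed
    from this[of N] show "good (play ann ben (2*N))" by simp
  qed
qed

theorem mainTheorem5:
  fixes S :: "'a set"
  assumes "infinite S \<or> 6 \<le> card S"
  shows "\<forall>n\<ge>1. \<exists>ann. (\<forall>h. ann h \<in> S) \<and>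
           (\<forall>ben. (\<forall>h. ben h \<in> S) \<longrightarrow>
              (\<forall>k>1. \<not> has_repetition_of_size (play ann ben n) k))"
proof (intro allI impI)
  fix n :: nat assume "n \<ge> 1"
  obtain T where TS: "T \<subseteq> S" and cT: "card T = 6" and fT: "finite T"
  proof (cases "finite S")
    case False then show ?thesis using that infinite_arbitrarily_large by blast
  next
    case True then have "6 \<le> card S" using assms by simp
    then show ?thesis using that obtain_subset_with_card_n by blast
  qed
  have Tne: "T \<noteq> {}" using cT by auto
  have "W T S n []"
  proof (rule ccontr)
    assume "\<not> W T S n []"
    then obtain \<beta> where "\<forall>r. set r \<subseteq> T \<and> length r = n \<longrightarrow> \<not> good (pl \<beta> r)" using loseW by blast
    then show False using count_pos[OF fT cT, of n \<beta>] by blast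
  qed
  then obtain ann where aS: "\<forall>h. ann h \<in> S"
    and g: "\<forall>ben. (\<forall>h. ben h \<in> S) \<longrightarrow> good (play ann ben (2*n))"
    using winW[OF _ TS Tne] by blast
  show "\<exists>ann. (\<forall>h. ann h \<in> S) \<and>
           (\<forall>ben. (\<forall>h. ben h \<in> S) \<longrightarrow>
              (\<forall>k>1. \<not> has_repetition_of_size (play ann ben n) k))"
  proof (intro exI conjI allI impI)
    show "ann h \<in> S" for h using aS by simp
    fix ben :: "'a list \<Rightarrow> 'a" and k :: nat
    assume "\<forall>h. ben h \<in> S" "k > 1"
    then have "good (play ann ben (2*n))" using g by simp
    then have "good (play ann ben n)" using good_take play_take[of n "2*n" ann ben] by simp
    then show "\<not> has_repetition_of_size (play ann ben n) k" using \<open>k > 1\<close> unfolding good_def by simp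
  qed
qed

end
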